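(* Let $R$ be an integral domain whose Jacobson radical is $\{0\}$, let $X=\operatorname{Specm}(R)$ and for $r\in R$ let $X_r=\{\mathfrak m\in X : r\notin\mathfrak m\}$. Then $\mathcal F=\{Z\subseteq X : X_r\subseteq Z \text{ for some } r\in R\setminus\{0\}\}$ is a filter on $X$. Moreover, if $\mathcal U$ is an ultrafilter on $X$ containing $\mathcal F$, then the canonical map $R\to\prod_{\mathcal U}R/\mathfrak m$ is injective, and the field $\prod_{\mathcal U}R/\mathfrak m$ contains (a copy of) the fraction field of $R$.
   Context: A filter on a set $X$ is a collection $\mathcal F$ of subsets of $X$ with $\emptyset\notin\mathcal F$, closed under finite intersections and under passing to supersets; an ultrafilter is a maximal filter. For a nonempty filter $\mathcal F$ on $X$ and commutative rings $S_i$ ($i\in X$), $\prod_{\mathcal F}S_i$ is the quotient of $\prod_{i\in X}S_i$ by the ideal of families $(s_i)$ with $\{i : s_i=0\}\in\mathcal F$; if all $S_i$ are fields and $\mathcal F$ is an ultrafilter this is a field. The canonical map $R\to\prod_{\mathcal U}R/\mathfrak m$ sends $r$ to the class of $(r \bmod \mathfrak m)_{\mathfrak m\in X}$. *)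

theory Defs
  imports "HOL-Algebra.QuotRing" "HOL-Computational_Algebra.Fraction_Field"
begin

definition tc_ring :: "('a::comm_ring_1) ring" where
  "tc_ring = \<lparr>carrier = UNIV, mult = (*), one = 1, zero = 0, add = (+)\<rparr>"

definition Specm :: "('a, 'b) ring_scheme \<Rightarrow> 'a set set" where
  "Specm R = {m. maximalideal m R}"

definition jacobson_radical :: "('a, 'b) ring_scheme \<Rightarrow> 'a set" where
  "jacobson_radical R = carrier R \<inter> \<Inter> (Specm R)"

definition is_filter_on :: "'i set \<Rightarrow> 'i set set \<Rightarrow> bool" where
  "is_filter_on X F \<longleftrightarrow>
     F \<subseteq> Pow X \<and> {} \<notin> F \<and> X \<in> F \<and>
     (\<forall>A\<in>F. \<forall>B\<in>F. A \<inter> B \<in> F) \<and>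
     (\<forall>A\<in>F. \<forall>B. A \<subseteq> B \<and> B \<subseteq> X \<longrightarrow> B \<in> F)"

definition is_ultrafilter_on :: "'i set \<Rightarrow> 'i set set \<Rightarrow> bool" where
  "is_ultrafilter_on X U \<longleftrightarrow>
     is_filter_on X U \<and> (\<forall>G. is_filter_on X G \<and> U \<subseteq> G \<longrightarrow> G = U)"

text \<open>Reduced product of rings S i (i in X) along a filter F: the quotient of the
  product ring by the ideal of families vanishing on a set in F; two families are
  identified iff they agree on a set belonging to F.\<close>
definition ultra_rel :: "('i \<Rightarrow> ('b, 'c) ring_scheme) \<Rightarrow> 'i set \<Rightarrow> 'i set set \<Rightarrow> (('i \<Rightarrow> 'b) \<times> ('i \<Rightarrow> 'b)) set" where
  "ultra_rel S X F = {(f, g). f \<in> (\<Pi>\<^sub>E i\<in>X. carrier (S i)) \<and> g \<in> (\<Pi>\<^sub>E i\<in>X. carrier (S i)) \<and>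
                              {i \<in> X. f i = g i} \<in> F}"

definition ultra_class :: "('i \<Rightarrow> ('b, 'c) ring_scheme) \<Rightarrow> 'i set \<Rightarrow> 'i set set \<Rightarrow> ('i \<Rightarrow> 'b) \<Rightarrow> ('i \<Rightarrow> 'b) set" where
  "ultra_class S X F f = ultra_rel S X F `` {f}"

definition ultraprod :: "('i \<Rightarrow> ('b, 'c) ring_scheme) \<Rightarrow> 'i set \<Rightarrow> 'i set set \<Rightarrow> ('i \<Rightarrow> 'b) set ring" where
  "ultraprod S X F = \<lparr>
     carrier = (\<Pi>\<^sub>E i\<in>X. carrier (S i)) // ultra_rel S X F,
     mult = (\<lambda>A B. \<Union>f\<in>A. \<Union>g\<in>B. ultra_class S X F (\<lambda>i\<in>X. f i \<otimes>\<^bsub>S i\<^esub> g i)),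
     one = ultra_class S X F (\<lambda>i\<in>X. \<one>\<^bsub>S i\<^esub>),
     zero = ultra_class S X F (\<lambda>i\<in>X. \<zero>\<^bsub>S i\<^esub>),
     add = (\<lambda>A B. \<Union>f\<in>A. \<Union>g\<in>B. ultra_class S X F (\<lambda>i\<in>X. f i \<oplus>\<^bsub>S i\<^esub> g i)) \<rparr>"

end

theory Submission
  imports Defs
begin

locale uprod =
  fixes S :: "'i \<Rightarrow> ('b, 'c) ring_scheme" and X :: "'i set" and U :: "'i set set"
  assumes filt: "is_filter_on X U" and cr: "\<And>i. i \<in> X \<Longrightarrow> cring (S i)"
begin

abbreviation "C \<equiv> (\<Pi>\<^sub>E i\<in>X. carrier (S i))"
abbreviation "P \<equiv> ultraprod S X U"
abbreviation "cls \<equiv> ultra_class S X U"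

lemma U_X: "X \<in> U" and U_empty: "{} \<notin> U"
  and U_int: "A \<in> U \<Longrightarrow> B \<in> U \<Longrightarrow> A \<inter> B \<in> U"
  and U_sup: "A \<in> U \<Longrightarrow> A \<subseteq> B \<Longrightarrow> B \<subseteq> X \<Longrightarrow> B \<in> U"
  using filt unfolding is_filter_on_def by blast+

lemma equiv_rel: "equiv C (ultra_rel S X U)"
proof (rule equivI)
  show "ultra_rel S X U \<subseteq> C \<times> C" unfolding ultra_rel_def by auto
  show "refl_on C (ultra_rel S X U)"
    unfolding refl_on_def ultra_rel_def using U_X by auto
  show "sym (ultra_rel S X U)"
    unfolding sym_def ultra_rel_def by (auto simp: eq_commute)
  show "trans (ultra_rel S X U)"
    unfolding trans_def ultra_rel_def
  proof (clarsimp)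
    fix f g h
    assume "f \<in> C" "g \<in> C" "h \<in> C" "{i \<in> X. f i = g i} \<in> U" "{i \<in> X. g i = h i} \<in> U"
    then have "{i \<in> X. f i = g i} \<inter> {i \<in> X. g i = h i} \<in> U" using U_int by blast
    then show "{i \<in> X. f i = h i} \<in> U" by (rule U_sup) auto
  qed
qed

lemma cls_eq: "f \<in> C \<Longrightarrow> g \<in> C \<Longrightarrow> cls f = cls g \<longleftrightarrow> {i \<in> X. f i = g i} \<in> U"
  unfolding ultra_class_def
  using eq_equiv_class_iff[OF equiv_rel] by (auto simp: ultra_rel_def)

lemma mem_cls: "g \<in> cls f \<longleftrightarrow> (f, g) \<in> ultra_rel S X U"
  by (simp add: ultra_class_def)

lemma self_cls: "f \<in> C \<Longrightarrow> f \<in> cls f"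
  using U_X by (simp add: mem_cls ultra_rel_def)

lemma carrier_P: "carrier P = C // ultra_rel S X U"
  by (simp add: ultraprod_def)

lemma cls_carrier: "f \<in> C \<Longrightarrow> cls f \<in> carrier P"
  unfolding carrier_P ultra_class_def by (rule quotientI)

lemma carrier_E:
  assumes "A \<in> carrier P" obtains f where "f \<in> C" "A = cls f"
  using assms unfolding carrier_P ultra_class_def by (auto elim: quotientE)

lemma cls_pw: "f \<in> C \<Longrightarrow> g \<in> C \<Longrightarrow> (\<And>i. i \<in> X \<Longrightarrow> f i = g i) \<Longrightarrow> cls f = cls g"
  by (metis PiE_iff extensionalityI)

lemma op_cls:
  assumes cl: "\<And>i x y. i \<in> X \<Longrightarrow> x \<in> carrier (S i) \<Longrightarrow> y \<in> carrier (S i) \<Longrightarrow> op i x y \<in> carrier (S i)"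
    and f: "f \<in> C" and g: "g \<in> C"
  shows "(\<Union>f'\<in>cls f. \<Union>g'\<in>cls g. cls (\<lambda>i\<in>X. op i (f' i) (g' i))) = cls (\<lambda>i\<in>X. op i (f i) (g i))"
proof -
  have *: "cls (\<lambda>i\<in>X. op i (f' i) (g' i)) = cls (\<lambda>i\<in>X. op i (f i) (g i))"
    if "f' \<in> cls f" "g' \<in> cls g" for f' g'
  proof -
    from that have f': "f' \<in> C" "{i \<in> X. f i = f' i} \<in> U" and g': "g' \<in> C" "{i \<in> X. g i = g' i} \<in> U"
      by (auto simp: mem_cls ultra_rel_def)
    have "{i \<in> X. f i = f' i} \<inter> {i \<in> X. g i = g' i} \<in> U" using f' g' U_int by blast
    then have "{i \<in> X. (\<lambda>i\<in>X. op i (f' i) (g' i)) i = (\<lambda>i\<in>X. op i (f i) (g i)) i} \<in> U"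
      by (rule U_sup) auto
    moreover have "(\<lambda>i\<in>X. op i (f' i) (g' i)) \<in> C" "(\<lambda>i\<in>X. op i (f i) (g i)) \<in> C"
      using f g f' g' cl by (auto simp: PiE_iff)
    ultimately show ?thesis using cls_eq by blast
  qed
  show ?thesis using * self_cls[OF f] self_cls[OF g] by blast
qed

lemma m_cl: "i \<in> X \<Longrightarrow> x \<in> carrier (S i) \<Longrightarrow> y \<in> carrier (S i) \<Longrightarrow> x \<otimes>\<^bsub>S i\<^esub> y \<in> carrier (S i)"
  using cr[of i] by (simp add: cring_def ring_def monoid.m_closed)
lemma a_cl: "i \<in> X \<Longrightarrow> x \<in> carrier (S i) \<Longrightarrow> y \<in> carrier (S i) \<Longrightarrow> x \<oplus>\<^bsub>S i\<^esub> y \<in> carrier (S i)"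
  using cr[of i] by (simp add: cring_def ring_def abelian_group_def abelian_monoid.a_closed)

lemma mult_cls: "f \<in> C \<Longrightarrow> g \<in> C \<Longrightarrow> cls f \<otimes>\<^bsub>P\<^esub> cls g = cls (\<lambda>i\<in>X. f i \<otimes>\<^bsub>S i\<^esub> g i)"
  unfolding ultraprod_def using op_cls[of "\<lambda>i x y. x \<otimes>\<^bsub>S i\<^esub> y", OF m_cl] by simp

lemma add_cls: "f \<in> C \<Longrightarrow> g \<in> C \<Longrightarrow> cls f \<oplus>\<^bsub>P\<^esub> cls g = cls (\<lambda>i\<in>X. f i \<oplus>\<^bsub>S i\<^esub> g i)"
  unfolding ultraprod_def using op_cls[of "\<lambda>i x y. x \<oplus>\<^bsub>S i\<^esub> y", OF a_cl] by simp

lemma zero_P: "\<zero>\<^bsub>P\<^esub> = cls (\<lambda>i\<in>X. \<zero>\<^bsub>S i\<^esub>)" by (simp add: ultraprod_def)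
lemma one_P: "\<one>\<^bsub>P\<^esub> = cls (\<lambda>i\<in>X. \<one>\<^bsub>S i\<^esub>)" by (simp add: ultraprod_def)

lemma pw:
  assumes "i \<in> X" "x \<in> carrier (S i)" "y \<in> carrier (S i)" "z \<in> carrier (S i)"
  shows "(x \<oplus>\<^bsub>S i\<^esub> y) \<oplus>\<^bsub>S i\<^esub> z = x \<oplus>\<^bsub>S i\<^esub> (y \<oplus>\<^bsub>S i\<^esub> z)"
    and "(x \<otimes>\<^bsub>S i\<^esub> y) \<otimes>\<^bsub>S i\<^esub> z = x \<otimes>\<^bsub>S i\<^esub> (y \<otimes>\<^bsub>S i\<^esub> z)"
    and "(x \<oplus>\<^bsub>S i\<^esub> y) \<otimes>\<^bsub>S i\<^esub> z = x \<otimes>\<^bsub>S i\<^esub> z \<oplus>\<^bsub>S i\<^esub> y \<otimes>\<^bsub>S i\<^esub> z"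
proof -
  interpret cring "S i" using cr assms(1) by blast
  show "(x \<oplus>\<^bsub>S i\<^esub> y) \<oplus>\<^bsub>S i\<^esub> z = x \<oplus>\<^bsub>S i\<^esub> (y \<oplus>\<^bsub>S i\<^esub> z)"
    using assms by (simp add: a_assoc)
  show "(x \<otimes>\<^bsub>S i\<^esub> y) \<otimes>\<^bsub>S i\<^esub> z = x \<otimes>\<^bsub>S i\<^esub> (y \<otimes>\<^bsub>S i\<^esub> z)"
    using assms by (simp add: m_assoc)
  show "(x \<oplus>\<^bsub>S i\<^esub> y) \<otimes>\<^bsub>S i\<^esub> z = x \<otimes>\<^bsub>S i\<^esub> z \<oplus>\<^bsub>S i\<^esub> y \<otimes>\<^bsub>S i\<^esub> z"
    using assms by (simp add: l_distr)
qed

lemma pw2: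
  assumes "i \<in> X" "x \<in> carrier (S i)" "y \<in> carrier (S i)"
  shows "x \<oplus>\<^bsub>S i\<^esub> y = y \<oplus>\<^bsub>S i\<^esub> x"
    and "x \<otimes>\<^bsub>S i\<^esub> y = y \<otimes>\<^bsub>S i\<^esub> x"
proof -
  interpret cring "S i" using cr assms(1) by blast
  show "x \<oplus>\<^bsub>S i\<^esub> y = y \<oplus>\<^bsub>S i\<^esub> x" using assms by (simp add: a_comm)
  show "x \<otimes>\<^bsub>S i\<^esub> y = y \<otimes>\<^bsub>S i\<^esub> x" using assms by (simp add: m_comm)
qed

lemma pw1:
  assumes "i \<in> X" "x \<in> carrier (S i)"
  shows "\<zero>\<^bsub>S i\<^esub> \<oplus>\<^bsub>S i\<^esub> x = x"
    and "(\<ominus>\<^bsub>S i\<^esub> x) \<oplus>\<^bsub>S i\<^esub> x = \<zero>\<^bsub>S i\<^esub>"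
    and "\<one>\<^bsub>S i\<^esub> \<otimes>\<^bsub>S i\<^esub> x = x"
    and "\<ominus>\<^bsub>S i\<^esub> x \<in> carrier (S i)"
proof -
  interpret cring "S i" using cr assms(1) by blast
  show "\<zero>\<^bsub>S i\<^esub> \<oplus>\<^bsub>S i\<^esub> x = x" "(\<ominus>\<^bsub>S i\<^esub> x) \<oplus>\<^bsub>S i\<^esub> x = \<zero>\<^bsub>S i\<^esub>"
    "\<one>\<^bsub>S i\<^esub> \<otimes>\<^bsub>S i\<^esub> x = x" "\<ominus>\<^bsub>S i\<^esub> x \<in> carrier (S i)" using assms by (simp_all add: l_neg)
qed

lemma pw0: "i \<in> X \<Longrightarrow> \<zero>\<^bsub>S i\<^esub> \<in> carrier (S i)" "i \<in> X \<Longrightarrow> \<one>\<^bsub>S i\<^esub> \<in> carrier (S i)"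
  using cr by (simp_all add: cring_def ring_def abelian_group_def abelian_monoid.zero_closed monoid.one_closed)

lemmas simps_S = pw0 pw1(4)

lemma in_C: "(\<lambda>i\<in>X. h i) \<in> C \<longleftrightarrow> (\<forall>i\<in>X. h i \<in> carrier (S i))"
  by (simp add: PiE_iff)

lemma C_ap: "f \<in> C \<Longrightarrow> i \<in> X \<Longrightarrow> f i \<in> carrier (S i)" by auto

lemma cring_P: "cring P"
proof (rule cringI)
  show "abelian_group P"
  proof (rule abelian_groupI)
    fix x y assume "x \<in> carrier P" "y \<in> carrier P"
    then show "x \<oplus>\<^bsub>P\<^esub> y \<in> carrier P"
      by (elim carrier_E) (simp add: add_cls, rule cls_carrier, auto simp: in_C C_ap a_cl)
  next
    show "\<zero>\<^bsub>P\<^esub> \<in> carrier P" by (simp add: zero_P cls_carrier in_C simps_S)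
  next
    fix x y z assume "x \<in> carrier P" "y \<in> carrier P" "z \<in> carrier P"
    then show "x \<oplus>\<^bsub>P\<^esub> y \<oplus>\<^bsub>P\<^esub> z = x \<oplus>\<^bsub>P\<^esub> (y \<oplus>\<^bsub>P\<^esub> z)"
      by (elim carrier_E) (simp add: add_cls in_C C_ap a_cl, rule cls_pw, auto simp: in_C C_ap a_cl simps_S pw pw1)
  next
    fix x y assume "x \<in> carrier P" "y \<in> carrier P"
    then show "x \<oplus>\<^bsub>P\<^esub> y = y \<oplus>\<^bsub>P\<^esub> x"
      by (elim carrier_E) (simp add: add_cls in_C C_ap a_cl, rule cls_pw, auto simp: in_C C_ap a_cl simps_S pw pw1 pw2)
  next
    fix x assume "x \<in> carrier P"
    then show "\<zero>\<^bsub>P\<^esub> \<oplus>\<^bsub>P\<^esub> x = x"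
      by (elim carrier_E) (simp add: zero_P add_cls in_C C_ap a_cl simps_S, rule cls_pw, auto simp: in_C C_ap a_cl simps_S pw1)
  next
    fix x assume "x \<in> carrier P"
    then obtain f where f: "f \<in> C" "x = cls f" by (rule carrier_E)
    have "cls (\<lambda>i\<in>X. \<ominus>\<^bsub>S i\<^esub> f i) \<in> carrier P" using f by (intro cls_carrier) (auto simp: in_C C_ap simps_S)
    moreover have nC: "(\<lambda>i\<in>X. \<ominus>\<^bsub>S i\<^esub> f i) \<in> C" using f by (auto simp: in_C C_ap simps_S)
    moreover have "cls (\<lambda>i\<in>X. \<ominus>\<^bsub>S i\<^esub> f i) \<oplus>\<^bsub>P\<^esub> x = \<zero>\<^bsub>P\<^esub>"
      unfolding f(2) zero_P add_cls[OF nC f(1)]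
      by (rule arg_cong[where f=cls], rule restrict_ext) (use f in \<open>auto simp: pw1 C_ap\<close>)
    ultimately show "\<exists>y\<in>carrier P. y \<oplus>\<^bsub>P\<^esub> x = \<zero>\<^bsub>P\<^esub>" by blast
  qed
next
  show "comm_monoid P"
  proof (rule comm_monoidI)
    fix x y assume "x \<in> carrier P" "y \<in> carrier P"
    then show "x \<otimes>\<^bsub>P\<^esub> y \<in> carrier P"
      by (elim carrier_E) (simp add: mult_cls, rule cls_carrier, auto simp: in_C C_ap m_cl)
  next
    show "\<one>\<^bsub>P\<^esub> \<in> carrier P" by (simp add: one_P cls_carrier in_C simps_S)
  next
    fix x y z assume "x \<in> carrier P" "y \<in> carrier P" "z \<in> carrier P"
    then show "x \<otimes>\<^bsub>P\<^esub> y \<otimes>\<^bsub>P\<^esub> z = x \<otimes>\<^bsub>P\<^esub> (y \<otimes>\<^bsub>P\<^esub> z)"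
      by (elim carrier_E) (simp add: mult_cls in_C C_ap m_cl, rule cls_pw, auto simp: in_C C_ap m_cl simps_S pw pw1)
  next
    fix x y assume "x \<in> carrier P" "y \<in> carrier P"
    then show "x \<otimes>\<^bsub>P\<^esub> y = y \<otimes>\<^bsub>P\<^esub> x"
      by (elim carrier_E) (simp add: mult_cls in_C C_ap m_cl, rule cls_pw, auto simp: in_C C_ap m_cl simps_S pw pw1 pw2)
  next
    fix x assume "x \<in> carrier P"
    then show "\<one>\<^bsub>P\<^esub> \<otimes>\<^bsub>P\<^esub> x = x"
      by (elim carrier_E) (simp add: one_P mult_cls in_C C_ap m_cl simps_S, rule cls_pw, auto simp: in_C C_ap m_cl simps_S pw1)
  qed
next
  fix x y z assume "x \<in> carrier P" "y \<in> carrier P" "z \<in> carrier P"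
  then show "(x \<oplus>\<^bsub>P\<^esub> y) \<otimes>\<^bsub>P\<^esub> z = x \<otimes>\<^bsub>P\<^esub> z \<oplus>\<^bsub>P\<^esub> y \<otimes>\<^bsub>P\<^esub> z"
    by (elim carrier_E) (simp add: mult_cls add_cls in_C C_ap m_cl a_cl, rule cls_pw, auto simp: in_C C_ap m_cl a_cl simps_S pw pw1)
qed

lemma hom_P:
  assumes "\<And>i. i \<in> X \<Longrightarrow> \<phi> i \<in> ring_hom R (S i)"
  shows "(\<lambda>r. cls (\<lambda>i\<in>X. \<phi> i r)) \<in> ring_hom R P"
proof (rule ring_hom_memI)
  fix x assume "x \<in> carrier R"
  then show "cls (\<lambda>i\<in>X. \<phi> i x) \<in> carrier P"
    using assms by (intro cls_carrier) (auto simp: in_C intro: ring_hom_closed)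
next
  fix x y assume xy: "x \<in> carrier R" "y \<in> carrier R"
  have c: "\<And>z. z \<in> carrier R \<Longrightarrow> (\<lambda>i\<in>X. \<phi> i z) \<in> C"
    using assms by (auto simp: in_C intro: ring_hom_closed)
  show "cls (\<lambda>i\<in>X. \<phi> i (x \<otimes>\<^bsub>R\<^esub> y)) = cls (\<lambda>i\<in>X. \<phi> i x) \<otimes>\<^bsub>P\<^esub> cls (\<lambda>i\<in>X. \<phi> i y)"
    by (subst mult_cls[OF c[OF xy(1)] c[OF xy(2)]], rule arg_cong[where f=cls], rule restrict_ext)
      (simp add: ring_hom_mult assms xy)
  show "cls (\<lambda>i\<in>X. \<phi> i (x \<oplus>\<^bsub>R\<^esub> y)) = cls (\<lambda>i\<in>X. \<phi> i x) \<oplus>\<^bsub>P\<^esub> cls (\<lambda>i\<in>X. \<phi> i y)"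
    by (subst add_cls[OF c[OF xy(1)] c[OF xy(2)]], rule arg_cong[where f=cls], rule restrict_ext)
      (simp add: ring_hom_add assms xy)
next
  show "cls (\<lambda>i\<in>X. \<phi> i \<one>\<^bsub>R\<^esub>) = \<one>\<^bsub>P\<^esub>"
    unfolding one_P by (rule arg_cong[where f=cls], rule restrict_ext) (simp add: ring_hom_one assms)
qed

end

locale uprod_field = uprod +
  assumes ultra: "is_ultrafilter_on X U" and fld: "\<And>i. i \<in> X \<Longrightarrow> field (S i)"
begin

lemma ultra_compl:
  assumes A: "A \<subseteq> X" "A \<notin> U" shows "X - A \<in> U"
proof (rule ccontr)
  assume nA: "X - A \<notin> U"
  have ne: "u \<inter> A \<noteq> {}" if "u \<in> U" for u
  proof
    assume "u \<inter> A = {}"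
    moreover have "u \<subseteq> X" using filt that unfolding is_filter_on_def by blast
    ultimately have "u \<subseteq> X - A" by blast
    then show False using U_sup[OF that] nA by blast
  qed
  define G where "G = {B. B \<subseteq> X \<and> (\<exists>u\<in>U. u \<inter> A \<subseteq> B)}"
  have UX: "\<And>u. u \<in> U \<Longrightarrow> u \<subseteq> X" using filt unfolding is_filter_on_def by blast
  have "is_filter_on X G"
    unfolding is_filter_on_def
  proof (intro conjI ballI allI impI)
    show "G \<subseteq> Pow X" unfolding G_def by blast
    show "{} \<notin> G" unfolding G_def using ne by blast
    show "X \<in> G" unfolding G_def using U_X by blast
  next
    fix B1 B2 assume "B1 \<in> G" "B2 \<in> G"
    then obtain u1 u2 where "u1 \<in> U" "u2 \<in> U" "u1 \<inter> A \<subseteq> B1" "u2 \<inter> A \<subseteq> B2" "B1 \<subseteq> X" "B2 \<subseteq> X"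
      unfolding G_def by blast
    then show "B1 \<inter> B2 \<in> G" unfolding G_def using U_int[of u1 u2] by blast
  next
    fix B1 B2 assume "B1 \<in> G" "B1 \<subseteq> B2 \<and> B2 \<subseteq> X"
    then show "B2 \<in> G" unfolding G_def by blast
  qed
  moreover have "U \<subseteq> G" unfolding G_def using UX by blast
  ultimately have "G = U" using ultra unfolding is_ultrafilter_on_def by blast
  moreover have "A \<in> G" unfolding G_def using U_X A by blast
  ultimately show False using A by blast
qed

lemma unit_facts: "i \<in> X \<Longrightarrow> x \<in> Units (S i) \<Longrightarrow> inv\<^bsub>S i\<^esub> x \<in> carrier (S i)"
  "i \<in> X \<Longrightarrow> x \<in> Units (S i) \<Longrightarrow> x \<otimes>\<^bsub>S i\<^esub> inv\<^bsub>S i\<^esub> x = \<one>\<^bsub>S i\<^esub>"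
proof -
  assume "i \<in> X" "x \<in> Units (S i)"
  moreover interpret cring "S i" using cr \<open>i \<in> X\<close> by blast
  show "inv\<^bsub>S i\<^esub> x \<in> carrier (S i)" "x \<otimes>\<^bsub>S i\<^esub> inv\<^bsub>S i\<^esub> x = \<one>\<^bsub>S i\<^esub>"
    using \<open>x \<in> Units (S i)\<close> by simp_all
qed

lemma field_P: "field P"
proof (rule cring.cring_fieldI2[OF cring_P])
  have "{i \<in> X. \<zero>\<^bsub>S i\<^esub> = \<one>\<^bsub>S i\<^esub>} = {}"
    using fld fieldE(2) by fastforce
  then show "\<zero>\<^bsub>P\<^esub> \<noteq> \<one>\<^bsub>P\<^esub>"
    unfolding zero_P one_P using U_empty by (subst cls_eq) (auto simp: in_C simps_S)
next
  fix a assume a: "a \<in> carrier P" "a \<noteq> \<zero>\<^bsub>P\<^esub>"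
  obtain f where f: "f \<in> C" "a = cls f" by (rule carrier_E[OF a(1)])
  have "cls f \<noteq> cls (\<lambda>i\<in>X. \<zero>\<^bsub>S i\<^esub>)" using a(2) f(2) zero_P by simp
  then have "{i \<in> X. f i = (\<lambda>i\<in>X. \<zero>\<^bsub>S i\<^esub>) i} \<notin> U"
    using cls_eq[OF f(1), of "\<lambda>i\<in>X. \<zero>\<^bsub>S i\<^esub>"] by (auto simp: in_C simps_S)
  moreover have "{i \<in> X. f i = (\<lambda>i\<in>X. \<zero>\<^bsub>S i\<^esub>) i} = {i \<in> X. f i = \<zero>\<^bsub>S i\<^esub>}" by auto
  ultimately have "{i \<in> X. f i = \<zero>\<^bsub>S i\<^esub>} \<notin> U" by simp
  then have Y: "{i \<in> X. f i \<noteq> \<zero>\<^bsub>S i\<^esub>} \<in> U"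
  proof -
    have "X - {i \<in> X. f i = \<zero>\<^bsub>S i\<^esub>} = {i \<in> X. f i \<noteq> \<zero>\<^bsub>S i\<^esub>}" by blast
    moreover have "X - {i \<in> X. f i = \<zero>\<^bsub>S i\<^esub>} \<in> U"
      by (rule ultra_compl) (use \<open>{i \<in> X. f i = \<zero>\<^bsub>S i\<^esub>} \<notin> U\<close> in auto)
    ultimately show ?thesis by simp
  qed
  define g where "g = (\<lambda>i\<in>X. if f i = \<zero>\<^bsub>S i\<^esub> then \<one>\<^bsub>S i\<^esub> else inv\<^bsub>S i\<^esub> f i)"
  have unit: "i \<in> X \<Longrightarrow> f i \<noteq> \<zero>\<^bsub>S i\<^esub> \<Longrightarrow> f i \<in> Units (S i)" for i
    using fld[of i] f by (auto simp: field.field_Units)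
  have gC: "g \<in> C" unfolding g_def using f unit
    by (auto simp: in_C simps_S unit_facts)
  have "a \<otimes>\<^bsub>P\<^esub> cls g = \<one>\<^bsub>P\<^esub>"
    unfolding f one_P using f gC
  proof (subst mult_cls, simp_all, subst cls_eq)
    show "(\<lambda>i\<in>X. f i \<otimes>\<^bsub>S i\<^esub> g i) \<in> C" using f gC by (auto simp: in_C C_ap m_cl)
    show "(\<lambda>i\<in>X. \<one>\<^bsub>S i\<^esub>) \<in> C" by (auto simp: in_C simps_S)
    show "{i \<in> X. (\<lambda>i\<in>X. f i \<otimes>\<^bsub>S i\<^esub> g i) i = (\<lambda>i\<in>X. \<one>\<^bsub>S i\<^esub>) i} \<in> U"
    proof (rule U_sup[OF Y])
      show "{i \<in> X. f i \<noteq> \<zero>\<^bsub>S i\<^esub>} \<subseteq> {i \<in> X. (\<lambda>i\<in>X. f i \<otimes>\<^bsub>S i\<^esub> g i) i = (\<lambda>i\<in>X. \<one>\<^bsub>S i\<^esub>) i}"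
        using unit by (auto simp: g_def unit_facts)
    qed auto
  qed
  then show "\<exists>b\<in>carrier P. a \<otimes>\<^bsub>P\<^esub> b = \<one>\<^bsub>P\<^esub>" using gC cls_carrier by blast
qed

end


lemma tc_simps: "carrier tc_ring = UNIV" "mult tc_ring = (*)" "one tc_ring = 1"
  "zero tc_ring = 0" "add tc_ring = (+)"
  by (simp_all add: tc_ring_def)

lemma tc_cring: "cring (tc_ring :: ('a::comm_ring_1) ring)"
proof (rule cringI)
  show "abelian_group (tc_ring :: 'a ring)"
    by (rule abelian_groupI) (auto simp: tc_simps algebra_simps intro: exI[of _ "- x" for x])
  show "comm_monoid (tc_ring :: 'a ring)"
    by (rule comm_monoidI) (auto simp: tc_simps algebra_simps)
qed (auto simp: tc_simps algebra_simps)

lemma tc_minus: "a_minus (tc_ring :: ('a::comm_ring_1) ring) x y = x - y"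
proof -
  interpret cring "tc_ring :: 'a ring" by (rule tc_cring)
  have "a_inv (tc_ring :: 'a ring) y = - y"
    by (rule minus_equality) (auto simp: tc_simps)
  then show ?thesis by (simp add: a_minus_def tc_simps)
qed

lemma (in cring) id_add:
  "x \<in> carrier R \<Longrightarrow> y \<in> carrier R \<Longrightarrow> b \<in> carrier R \<Longrightarrow> d \<in> carrier R \<Longrightarrow>
   (x \<oplus> y) \<otimes> (b \<otimes> d) = (x \<otimes> b) \<otimes> d \<oplus> (y \<otimes> d) \<otimes> b"
  by algebra

lemma (in cring) id_mult:
  "x \<in> carrier R \<Longrightarrow> y \<in> carrier R \<Longrightarrow> b \<in> carrier R \<Longrightarrow> d \<in> carrier R \<Longrightarrow>
   (x \<otimes> y) \<otimes> (b \<otimes> d) = (x \<otimes> b) \<otimes> (y \<otimes> d)"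
  by algebra

lemma (in cring) id_swap:
  "x \<in> carrier R \<Longrightarrow> b \<in> carrier R \<Longrightarrow> d \<in> carrier R \<Longrightarrow>
   (x \<otimes> b) \<otimes> d = (x \<otimes> d) \<otimes> b"
  by algebra

lemma fract_embed:
  fixes can :: "'a::idom \<Rightarrow> 'b" and P :: "'b ring"
  assumes fP: "field P" and hom: "can \<in> ring_hom (tc_ring :: 'a ring) P" and inj: "inj can"
  shows "\<exists>h. h \<in> ring_hom (tc_ring :: 'a fract ring) P \<and> inj h \<and> (\<forall>r. h (Fract r 1) = can r)"
proof -
  interpret P: field P by (rule fP)
  have canC: "\<And>x. can x \<in> carrier P" using ring_hom_closed[OF hom] by (simp add: tc_simps)
  have canM: "\<And>x y. can (x * y) = can x \<otimes>\<^bsub>P\<^esub> can y" using ring_hom_mult[OF hom] by (simp add: tc_simps)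
  have canA: "\<And>x y. can (x + y) = can x \<oplus>\<^bsub>P\<^esub> can y" using ring_hom_add[OF hom] by (simp add: tc_simps)
  have can1: "can 1 = \<one>\<^bsub>P\<^esub>" using ring_hom_one[OF hom] by (simp add: tc_simps)
  have can0: "can 0 = \<zero>\<^bsub>P\<^esub>"
    using ring_hom_zero[OF hom cring.axioms(1)[OF tc_cring] P.ring_axioms] by (simp add: tc_simps)
  have nz: "\<And>b. b \<noteq> 0 \<Longrightarrow> can b \<noteq> \<zero>\<^bsub>P\<^esub>" using inj can0 by (metis injD)
  define Q where "Q x y \<longleftrightarrow> y \<in> carrier P \<and> (\<exists>a b. b \<noteq> 0 \<and> x = Fract a b \<and> y \<otimes>\<^bsub>P\<^esub> can b = can a)"
    for x y
  define h where "h x = (SOME y. Q x y)" for x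
  have canc: "y = z" if "b \<noteq> 0" "y \<in> carrier P" "z \<in> carrier P" "y \<otimes>\<^bsub>P\<^esub> can b = z \<otimes>\<^bsub>P\<^esub> can b" for y z b
    using P.m_rcancel[OF nz[OF that(1)] canC that(2,3)] that(4) by simp
  have key: "Q (Fract a b) y \<longleftrightarrow> y \<in> carrier P \<and> y \<otimes>\<^bsub>P\<^esub> can b = can a" if b: "b \<noteq> 0" for a b y
  proof
    assume "Q (Fract a b) y"
    then obtain c d where y: "y \<in> carrier P" and d: "d \<noteq> 0" "Fract a b = Fract c d" "y \<otimes>\<^bsub>P\<^esub> can d = can c"
      unfolding Q_def by blast
    have ad: "a * d = c * b" using d(2) eq_fract(1)[OF b d(1)] by simp
    have "(y \<otimes>\<^bsub>P\<^esub> can b) \<otimes>\<^bsub>P\<^esub> can d = (y \<otimes>\<^bsub>P\<^esub> can d) \<otimes>\<^bsub>P\<^esub> can b"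
      using P.id_swap y canC by blast
    also have "\<dots> = can a \<otimes>\<^bsub>P\<^esub> can d" using d(3) ad canM by metis
    finally have "y \<otimes>\<^bsub>P\<^esub> can b = can a" using canc[OF d(1)] y canC by blast
    then show "y \<in> carrier P \<and> y \<otimes>\<^bsub>P\<^esub> can b = can a" using y by simp
  next
    assume "y \<in> carrier P \<and> y \<otimes>\<^bsub>P\<^esub> can b = can a"
    then show "Q (Fract a b) y" unfolding Q_def using b by blast
  qed
  have hfr: "h (Fract a b) \<in> carrier P \<and> h (Fract a b) \<otimes>\<^bsub>P\<^esub> can b = can a" if b: "b \<noteq> 0" for a b
  proof -
    have U: "can b \<in> Units P" using P.field_Units nz[OF b] canC by simp
    have "can a \<otimes>\<^bsub>P\<^esub> inv\<^bsub>P\<^esub> can b \<in> carrier P \<and> can a \<otimes>\<^bsub>P\<^esub> inv\<^bsub>P\<^esub> can b \<otimes>\<^bsub>P\<^esub> can b = can a"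
      using U canC by (simp add: P.m_assoc)
    then have "Q (Fract a b) (can a \<otimes>\<^bsub>P\<^esub> inv\<^bsub>P\<^esub> can b)" using key[OF b] by blast
    then have "Q (Fract a b) (h (Fract a b))" unfolding h_def by (rule someI)
    then show ?thesis using key[OF b] by blast
  qed
  have huniq: "h (Fract a b) = z" if "b \<noteq> 0" "z \<in> carrier P" "z \<otimes>\<^bsub>P\<^esub> can b = can a" for a b z
    using canc[OF that(1)] hfr[OF that(1)] that by metis
  have hC: "h x \<in> carrier P" for x by (cases x) (use hfr in blast)
  have "h \<in> ring_hom (tc_ring :: 'a fract ring) P"
  proof (rule ring_hom_memI)
    fix x y :: "'a fract"
    show "h x \<in> carrier P" by (rule hC)
    obtain a b where x: "x = Fract a b" "b \<noteq> 0" by (cases x)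
    obtain c d where y: "y = Fract c d" "d \<noteq> 0" by (cases y)
    have bd: "b * d \<noteq> 0" using x y by simp
    note hx = hfr[OF x(2), of a, folded x(1)] and hy = hfr[OF y(2), of c, folded y(1)]
    show "h (x \<otimes>\<^bsub>tc_ring\<^esub> y) = h x \<otimes>\<^bsub>P\<^esub> h y"
    proof -
      have "x \<otimes>\<^bsub>tc_ring\<^esub> y = Fract (a * c) (b * d)" using x y by (simp add: tc_simps)
      moreover have "h (Fract (a * c) (b * d)) = h x \<otimes>\<^bsub>P\<^esub> h y"
        by (rule huniq[OF bd]) (use hx hy canC in \<open>simp_all add: canM P.id_mult\<close>)
      ultimately show ?thesis by simp
    qed
    show "h (x \<oplus>\<^bsub>tc_ring\<^esub> y) = h x \<oplus>\<^bsub>P\<^esub> h y"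
    proof -
      have "x \<oplus>\<^bsub>tc_ring\<^esub> y = Fract (a * d + c * b) (b * d)" using x y by (simp add: tc_simps)
      moreover have "h (Fract (a * d + c * b) (b * d)) = h x \<oplus>\<^bsub>P\<^esub> h y"
        by (rule huniq[OF bd]) (use hx hy canC in \<open>simp_all add: canM canA P.id_add\<close>)
      ultimately show ?thesis by simp
    qed
  next
    have "h (Fract 1 1) = \<one>\<^bsub>P\<^esub>" by (rule huniq) (simp_all add: can1)
    then show "h \<one>\<^bsub>tc_ring\<^esub> = \<one>\<^bsub>P\<^esub>" by (simp add: tc_simps One_fract_def)
  qed
  moreover have "inj h"
  proof (rule injI)
    fix x y :: "'a fract" assume hxy: "h x = h y"
    obtain a b where x: "x = Fract a b" "b \<noteq> 0" by (cases x)
    obtain c d where y: "y = Fract c d" "d \<noteq> 0" by (cases y)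
    note hx = hfr[OF x(2), of a, folded x(1)] and hy = hfr[OF y(2), of c, folded y(1)]
    have "can (a * d) = (h x \<otimes>\<^bsub>P\<^esub> can b) \<otimes>\<^bsub>P\<^esub> can d" using hx canM by simp
    also have "\<dots> = (h y \<otimes>\<^bsub>P\<^esub> can d) \<otimes>\<^bsub>P\<^esub> can b" using hxy P.id_swap hC canC by simp
    also have "\<dots> = can (c * b)" using hy canM by simp
    finally have "a * d = c * b" using inj by (simp add: inj_eq)
    then show "x = y" using x y eq_fract(1)[OF x(2) y(2)] by simp
  qed
  moreover have "\<forall>r. h (Fract r 1) = can r"
    by (intro allI huniq) (simp_all add: canC can1)
  ultimately show ?thesis by blast
qed


theorem proposition1p1:
  fixes R :: "('a::idom) ring" and X :: "'a set set" and Xr :: "'a \<Rightarrow> 'a set set"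
    and F :: "'a set set set"
  assumes "R = tc_ring"
    and "jacobson_radical R = {\<zero>\<^bsub>R\<^esub>}"
    and "X = Specm R"
    and "\<And>r. Xr r = {m \<in> X. r \<notin> m}"
    and "F = {Z. Z \<subseteq> X \<and> (\<exists>r \<in> carrier R - {\<zero>\<^bsub>R\<^esub>}. Xr r \<subseteq> Z)}"
  shows "is_filter_on X F \<and>
    (\<forall>U. is_ultrafilter_on X U \<and> F \<subseteq> U \<longrightarrow>
       (let P = ultraprod (\<lambda>m. R Quot m) X U;
            can = (\<lambda>r. ultra_class (\<lambda>m. R Quot m) X U (\<lambda>m\<in>X. m +>\<^bsub>R\<^esub> r))
        in field P \<and> can \<in> ring_hom R P \<and> inj_on can (carrier R) \<and>
           (\<exists>h. h \<in> ring_hom (tc_ring :: 'a fract ring) P \<and> inj h \<and>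
                (\<forall>r \<in> carrier R. h (Fract r 1) = can r))))"
proof -
  have cR: "cring R" using assms(1) tc_cring by simp
  interpret R: cring R by (rule cR)
  have carR: "carrier R = UNIV" and zR: "\<zero>\<^bsub>R\<^esub> = 0" and oR: "\<one>\<^bsub>R\<^esub> = 1"
    and mR: "\<And>x y. x \<otimes>\<^bsub>R\<^esub> y = x * y"
    using assms(1) by (simp_all add: tc_simps)
  have minR: "\<And>x y. x \<ominus>\<^bsub>R\<^esub> y = x - y" using assms(1) tc_minus by simp
  have maxX: "maximalideal m R" if "m \<in> X" for m using that assms(3) by (simp add: Specm_def)
  have primeX: "primeideal m R" if "m \<in> X" for m using R.maximalideal_prime maxX that by blast
  have Xr_ne: "Xr r \<noteq> {}" if "r \<noteq> 0" for r
  proof -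
    have "r \<notin> jacobson_radical R" using assms(2) that zR by simp
    then obtain m where "m \<in> X" "r \<notin> m" using carR assms(3) by (auto simp: jacobson_radical_def)
    then show ?thesis using assms(4) by blast
  qed
  have Xr_mult: "Xr (r * s) = Xr r \<inter> Xr s" for r s
  proof -
    have "r * s \<in> m \<longleftrightarrow> r \<in> m \<or> s \<in> m" if "m \<in> X" for m
    proof -
      interpret primeideal m R by (rule primeX[OF that])
      show ?thesis using I_prime[of r s] I_r_closed[of r s] I_l_closed[of s r] by (auto simp: carR mR)
    qed
    then show ?thesis using assms(4) by auto
  qed
  have XrX: "Xr r \<subseteq> X" for r using assms(4) by auto
  have filt: "is_filter_on X F"
    unfolding is_filter_on_def
  proof (intro conjI ballI allI impI)
    show "F \<subseteq> Pow X" using assms(5) by auto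
    show "{} \<notin> F" using assms(5) Xr_ne zR by auto
    have "(1::'a) \<in> carrier R - {\<zero>\<^bsub>R\<^esub>}" by (simp add: carR zR)
    then show "X \<in> F" unfolding assms(5) using XrX[of 1] by blast
  next
    fix A B assume "A \<in> F" "B \<in> F"
    then obtain r s where "r \<noteq> 0" "s \<noteq> 0" "Xr r \<subseteq> A" "Xr s \<subseteq> B" "A \<subseteq> X" "B \<subseteq> X"
      using assms(5) zR by auto
    moreover have "r * s \<noteq> 0" using calculation by simp
    then have "r * s \<in> carrier R - {\<zero>\<^bsub>R\<^esub>}" by (simp add: carR zR)
    moreover have "Xr (r * s) \<subseteq> A \<inter> B" using Xr_mult[of r s] calculation by blast
    ultimately show "A \<inter> B \<in> F" unfolding assms(5) using \<open>A \<subseteq> X\<close> by blast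
  next
    fix A B assume "A \<in> F" "A \<subseteq> B \<and> B \<subseteq> X"
    then show "B \<in> F" using assms(5) by blast
  qed
  have main: "let P = ultraprod (\<lambda>m. R Quot m) X U;
            can = (\<lambda>r. ultra_class (\<lambda>m. R Quot m) X U (\<lambda>m\<in>X. m +>\<^bsub>R\<^esub> r))
        in field P \<and> can \<in> ring_hom R P \<and> inj_on can (carrier R) \<and>
           (\<exists>h. h \<in> ring_hom (tc_ring :: 'a fract ring) P \<and> inj h \<and>
                (\<forall>r \<in> carrier R. h (Fract r 1) = can r))"
    if ultra: "is_ultrafilter_on X U" and FU: "F \<subseteq> U" for U
  proof -
    have filtU: "is_filter_on X U" using ultra by (simp add: is_ultrafilter_on_def)
    have fS: "field (R Quot m)" if "m \<in> X" for m
      using maximalideal.quotient_is_field[OF maxX[OF that] cR] .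
    have cS: "\<And>m. m \<in> X \<Longrightarrow> cring (R Quot m)" using fS fieldE(1) by blast
    interpret UP: uprod_field "\<lambda>m. R Quot m" X U
      using filtU cS ultra fS by (simp add: uprod_field_def uprod_def uprod_field_axioms_def)
    define can where "can = (\<lambda>r. ultra_class (\<lambda>m. R Quot m) X U (\<lambda>m\<in>X. m +>\<^bsub>R\<^esub> r))"
    have homm: "\<And>m. m \<in> X \<Longrightarrow> (\<lambda>r. m +>\<^bsub>R\<^esub> r) \<in> ring_hom R (R Quot m)"
      by (rule ideal.rcos_ring_hom, rule maximalideal.axioms(1), rule maxX)
    have hom: "can \<in> ring_hom R (ultraprod (\<lambda>m. R Quot m) X U)"
      unfolding can_def using UP.hom_P[OF homm] by simp
    have repC: "(\<lambda>m\<in>X. m +>\<^bsub>R\<^esub> r) \<in> (\<Pi>\<^sub>E m\<in>X. carrier (R Quot m))" for r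
    proof -
      have "\<And>m. m \<in> X \<Longrightarrow> m +>\<^bsub>R\<^esub> r \<in> carrier (R Quot m)"
        using ring_hom_closed[OF homm] carR by blast
      then show ?thesis by (simp add: restrict_PiE_iff)
    qed
    have inj: "inj_on can (carrier R)"
    proof (rule inj_onI)
      fix r s assume "r \<in> carrier R" "s \<in> carrier R" "can r = can s"
      have E: "{m \<in> X. (\<lambda>m\<in>X. m +>\<^bsub>R\<^esub> r) m = (\<lambda>m\<in>X. m +>\<^bsub>R\<^esub> s) m} \<in> U"
        by (rule iffD1[OF UP.cls_eq[OF repC repC]]) (use \<open>can r = can s\<close> in \<open>simp add: can_def\<close>)
      show "r = s"
      proof (rule ccontr)
        assume "r \<noteq> s"
        then have "r - s \<noteq> 0" by simp
        then have "r - s \<in> carrier R - {\<zero>\<^bsub>R\<^esub>}" by (simp add: carR zR)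
        then have "Xr (r - s) \<in> F" unfolding assms(5) using XrX by blast
        then have "Xr (r - s) \<in> U" using FU by blast
        then have "Xr (r - s) \<inter> {m \<in> X. (\<lambda>m\<in>X. m +>\<^bsub>R\<^esub> r) m = (\<lambda>m\<in>X. m +>\<^bsub>R\<^esub> s) m} \<in> U"
          using E UP.U_int by blast
        moreover have "Xr (r - s) \<inter> {m \<in> X. (\<lambda>m\<in>X. m +>\<^bsub>R\<^esub> r) m = (\<lambda>m\<in>X. m +>\<^bsub>R\<^esub> s) m} = {}"
        proof (rule ccontr)
          assume "\<not> ?thesis"
          then obtain m where m: "m \<in> X" "r - s \<notin> m" "m +>\<^bsub>R\<^esub> r = m +>\<^bsub>R\<^esub> s"
            using assms(4) by auto
          have "ideal m R" using maxX[OF m(1)] maximalideal.axioms(1) by blast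
          then have "r \<ominus>\<^bsub>R\<^esub> s \<in> m" using R.quotient_eq_iff_same_a_r_cos m(3) carR by blast
          then show False using m(2) minR by simp
        qed
        ultimately show False using UP.U_empty by simp
      qed
    qed
    have fP: "field (ultraprod (\<lambda>m. R Quot m) X U)" by (rule UP.field_P)
    have "\<exists>h. h \<in> ring_hom (tc_ring :: 'a fract ring) (ultraprod (\<lambda>m. R Quot m) X U) \<and> inj h \<and>
                (\<forall>r. h (Fract r 1) = can r)"
    proof (rule fract_embed[OF fP])
      show "can \<in> ring_hom tc_ring (ultraprod (\<lambda>m. R Quot m) X U)" using hom assms(1) by simp
      show "inj can" using inj carR by simp
    qed
    then obtain h where h: "h \<in> ring_hom (tc_ring :: 'a fract ring) (ultraprod (\<lambda>m. R Quot m) X U)"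
      "inj h" "\<forall>r. h (Fract r 1) = can r" by blast
    show ?thesis unfolding Let_def can_def[symmetric]
      by (intro conjI fP hom inj exI[of _ h]) (use h in auto)
  qed
  show ?thesis
    apply (intro conjI allI impI)
     apply (rule filt)
    apply (rule main)
     apply simp_all
    done
qed

end
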